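(* Let $H$ be a real separable Hilbert space, $(T_t)_{t\ge0}$ a strongly continuous semigroup on $H$, $(\mu_t)_{t\ge0}$ probability measures on $H$ with $\lim_{t\to0}\mu_t=\mu_0=\delta_0$ weakly and $\mu_{t+s}=(\mu_t\circ T_s^{-1})\ast\mu_s$ for $s,t\ge0$, and let $P_tf(x)=\int_Hf(T_tx+y)\,\mu_t(dy)$. Then: (i) for every $f\in Lip_b(H)$ the map $[0,\infty)\times H\ni(t,x)\mapsto P_tf(x)$ is continuous; moreover $P_t(Lip_b(H))\subset Lip_b(H)$ and $P_t(C_b(H))\subset C_b(H)$ for all $t>0$; (ii) $P_t(C_b^{\sigma w}(H))\subset C_b^{\sigma w}(H)$ for all $t>0$; (iii) if $T_t$ is compact, then $P_t(C_b(H))\subset C_b^{\sigma w}(H)$.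
   Context: $Lip_b(H)$: bounded Lipschitz functions; $C_b(H)$: bounded norm-continuous functions; $C_b^{\sigma w}(H)$: bounded functions that are sequentially continuous for the weak topology of $H$. *)

theory Defs
  imports "HOL-Probability.Probability"
begin

text \<open>Real separable Hilbert space: type class real_inner + complete_space + second_countable_topology.\<close>

definition meas_conv :: "'a::{real_normed_vector, second_countable_topology} measure \<Rightarrow> 'a measure \<Rightarrow> 'a measure" where
  "meas_conv M N = distr (M \<Otimes>\<^sub>M N) borel (\<lambda>(x, y). x + y)"

definition strongly_continuous_semigroup :: "(real \<Rightarrow> 'a::real_normed_vector \<Rightarrow> 'a) \<Rightarrow> bool" where
  "strongly_continuous_semigroup T \<longleftrightarrow>
     (\<forall>t\<ge>0. bounded_linear (T t)) \<and>
     T 0 = id \<and>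
     (\<forall>t\<ge>0. \<forall>s\<ge>0. T (t + s) = T t \<circ> T s) \<and>
     (\<forall>x. continuous_on {0..} (\<lambda>t. T t x))"

definition weak_conv_at_0 :: "(real \<Rightarrow> 'a::real_normed_vector measure) \<Rightarrow> 'a measure \<Rightarrow> bool" where
  "weak_conv_at_0 \<mu> \<nu> \<longleftrightarrow>
     (\<forall>f :: 'a \<Rightarrow> real. continuous_on UNIV f \<and> bounded (range f) \<longrightarrow>
        ((\<lambda>t. integral\<^sup>L (\<mu> t) f) \<longlongrightarrow> integral\<^sup>L \<nu> f) (at_right 0))"

definition Lip_b :: "('a::metric_space \<Rightarrow> real) set" where
  "Lip_b = {f. bounded (range f) \<and> (\<exists>L. L-lipschitz_on UNIV f)}"

definition C_b :: "('a::topological_space \<Rightarrow> real) set" where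
  "C_b = {f. bounded (range f) \<and> continuous_on UNIV f}"

definition weakly_convergent_to :: "(nat \<Rightarrow> 'a::real_inner) \<Rightarrow> 'a \<Rightarrow> bool" where
  "weakly_convergent_to xs x \<longleftrightarrow> (\<forall>h. (\<lambda>n. xs n \<bullet> h) \<longlonglongrightarrow> x \<bullet> h)"

definition C_b_sigma_w :: "('a::real_inner \<Rightarrow> real) set" where
  "C_b_sigma_w = {f. bounded (range f) \<and>
     (\<forall>xs x. weakly_convergent_to xs x \<longrightarrow> (\<lambda>n. f (xs n)) \<longlonglongrightarrow> f x)}"

definition compact_operator :: "('a::real_normed_vector \<Rightarrow> 'b::real_normed_vector) \<Rightarrow> bool" where
  "compact_operator A \<longleftrightarrow> bounded_linear A \<and> compact (closure (A ` ball 0 1))"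

definition transition_op ::
  "(real \<Rightarrow> 'a::real_normed_vector \<Rightarrow> 'a) \<Rightarrow> (real \<Rightarrow> 'a measure) \<Rightarrow> real \<Rightarrow> ('a \<Rightarrow> real) \<Rightarrow> 'a \<Rightarrow> real" where
  "transition_op T \<mu> t f x = (\<integral>y. f (T t x + y) \<partial>(\<mu> t))"

end

theory Submission
  imports Defs
begin


lemma cont_meas:
  assumes "sets M = sets borel" "continuous_on UNIV f"
  shows "f \<in> borel_measurable M"
  unfolding measurable_cong_sets[OF assms(1) refl] by (rule borel_measurable_continuous_onI[OF assms(2)])

lemma bnd_integrable:
  fixes f :: "'a \<Rightarrow> real"
  assumes "prob_space M" "f \<in> borel_measurable M" "\<And>y. \<bar>f y\<bar> \<le> B"
  shows "integrable M f"
proof -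
  interpret prob_space M by fact
  have "AE x in M. norm (f x) \<le> B" using assms(3) by simp
  then show ?thesis using assms(2) by (rule integrable_const_bound)
qed

lemma bnd_integral:
  fixes f :: "'a \<Rightarrow> real"
  assumes "prob_space M" "f \<in> borel_measurable M" "\<And>y. \<bar>f y\<bar> \<le> B"
  shows "\<bar>integral\<^sup>L M f\<bar> \<le> B"
proof -
  interpret prob_space M by fact
  have i: "integrable M f" using bnd_integrable[OF assms] .
  have ia: "integrable M (\<lambda>x. \<bar>f x\<bar>)" using i by (rule Bochner_Integration.integrable_abs)
  have "\<bar>integral\<^sup>L M f\<bar> \<le> (\<integral>x. \<bar>f x\<bar> \<partial>M)" by (rule integral_abs_bound)
  also have "\<dots> \<le> B"
  proof (rule integral_le_const[OF ia])
    show "AE x in M. \<bar>f x\<bar> \<le> B" using assms(3) by simp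
  qed
  finally show ?thesis .
qed

lemma diff_integral:
  fixes f h :: "'a \<Rightarrow> real"
  assumes "prob_space M" "f \<in> borel_measurable M" "h \<in> borel_measurable M"
    "\<And>y. \<bar>f y\<bar> \<le> B" "\<And>y. \<bar>h y\<bar> \<le> B" "\<And>y. \<bar>f y - h y\<bar> \<le> c"
  shows "\<bar>integral\<^sup>L M f - integral\<^sup>L M h\<bar> \<le> c"
proof -
  have i1: "integrable M f" using bnd_integrable[OF assms(1,2,4)] .
  have i2: "integrable M h" using bnd_integrable[OF assms(1,3,5)] .
  have m: "(\<lambda>y. f y - h y) \<in> borel_measurable M" using assms(2,3) by (rule borel_measurable_diff)
  have "integral\<^sup>L M f - integral\<^sup>L M h = integral\<^sup>L M (\<lambda>y. f y - h y)"
    using Bochner_Integration.integral_diff[OF i1 i2] by simp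
  also have "\<bar>\<dots>\<bar> \<le> c" using bnd_integral[OF assms(1) m assms(6)] .
  finally show ?thesis .
qed

lemma dct_bnd:
  fixes s :: "nat \<Rightarrow> 'a \<Rightarrow> real"
  assumes "prob_space M" "\<And>n. s n \<in> borel_measurable M" "f \<in> borel_measurable M"
    "\<And>n y. \<bar>s n y\<bar> \<le> B" "\<And>y. (\<lambda>n. s n y) \<longlonglongrightarrow> f y"
  shows "(\<lambda>n. integral\<^sup>L M (s n)) \<longlonglongrightarrow> integral\<^sup>L M f"
proof -
  interpret prob_space M by fact
  show ?thesis
  proof (rule integral_dominated_convergence[where w="\<lambda>_. B"])
    show "f \<in> borel_measurable M" by fact
    show "\<And>n. s n \<in> borel_measurable M" by fact
    show "integrable M (\<lambda>_. B)" by (rule integrable_const)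
    show "AE x in M. (\<lambda>n. s n x) \<longlonglongrightarrow> f x" using assms(5) by simp
    show "\<And>n. AE x in M. norm (s n x) \<le> B" using assms(4) by simp
  qed
qed



lemma pair_meas_add:
  fixes M N :: "'a::{real_normed_vector, second_countable_topology} measure"
  assumes "sets M = sets borel" "sets N = sets borel"
  shows "(\<lambda>(x, y). x + y) \<in> measurable (M \<Otimes>\<^sub>M N) borel"
proof -
  have "sets (M \<Otimes>\<^sub>M N) = sets (borel \<Otimes>\<^sub>M borel)" using assms by (rule sets_pair_measure_cong)
  also have "\<dots> = sets (borel :: ('a \<times> 'a) measure)" by (rule arg_cong[where f=sets, OF borel_prod])
  finally have e: "sets (M \<Otimes>\<^sub>M N) = sets (borel :: ('a \<times> 'a) measure)" .
  have "(\<lambda>(x, y). x + y) \<in> borel_measurable (borel :: ('a \<times> 'a) measure)"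
  proof -
    have "continuous_on UNIV (\<lambda>p::'a \<times> 'a. fst p + snd p)" by (intro continuous_intros)
    then show ?thesis unfolding case_prod_beta by (rule borel_measurable_continuous_onI)
  qed
  then show ?thesis unfolding measurable_cong_sets[OF e refl] .
qed

lemma conv_bound:
  fixes M N :: "'a::{real_normed_vector, second_countable_topology} measure"
    and g :: "'a \<Rightarrow> real"
  assumes M: "prob_space M" "sets M = sets borel" and N: "prob_space N" "sets N = sets borel"
    and gb: "\<And>y. \<bar>g y\<bar> \<le> B" and gl: "L-lipschitz_on UNIV g"
  shows "\<bar>integral\<^sup>L (meas_conv M N) g - integral\<^sup>L M g\<bar> \<le> (\<integral>y. min (2*B) (L * norm y) \<partial>N)"
proof -
  interpret pM: prob_space M by fact
  interpret pN: prob_space N by fact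
  interpret P: pair_prob_space M N by unfold_locales
  have gc: "continuous_on UNIV g" using gl by (rule lipschitz_on_continuous_on)
  have gm: "g \<in> borel_measurable borel" using gc by (rule borel_measurable_continuous_onI)
  have add: "(\<lambda>(x, y). x + y) \<in> measurable (M \<Otimes>\<^sub>M N) borel" using M N by (intro pair_meas_add) auto
  have e1: "integral\<^sup>L (meas_conv M N) g = (\<integral>p. g (fst p + snd p) \<partial>(M \<Otimes>\<^sub>M N))"
    unfolding meas_conv_def by (subst integral_distr[OF add gm]) (simp add: case_prod_beta)
  have gM: "g \<in> borel_measurable M" using M(2) gc by (rule cont_meas)
  have fstm: "(\<lambda>p. g (fst p)) \<in> borel_measurable (M \<Otimes>\<^sub>M N)" using measurable_comp[OF measurable_fst gM] by (simp add: o_def)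
  have sumM: "(\<lambda>p. g (fst p + snd p)) \<in> borel_measurable (M \<Otimes>\<^sub>M N)"
    using measurable_comp[OF add gm] by (simp add: o_def case_prod_beta)
  have hc: "continuous_on UNIV (\<lambda>y::'a. min (2*B) (L * norm y))" by (intro continuous_intros)
  have hN: "(\<lambda>y::'a. min (2*B) (L * norm y)) \<in> borel_measurable N" using N(2) hc by (rule cont_meas)
  have sndm: "(\<lambda>p. min (2*B) (L * norm (snd p))) \<in> borel_measurable (M \<Otimes>\<^sub>M N)" using measurable_comp[OF measurable_snd hN] by (simp add: o_def)
  have B0: "0 \<le> B" using gb[of 0] by auto
  have L0: "0 \<le> L" using gl lipschitz_on_nonneg by blast
  have e2: "integral\<^sup>L M g = (\<integral>p. g (fst p) \<partial>(M \<Otimes>\<^sub>M N))"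
  proof -
    have "(\<integral>x. (\<integral>y. (\<lambda>p. g (fst p)) (x,y) \<partial>N) \<partial>M) = (\<integral>p. g (fst p) \<partial>(M \<Otimes>\<^sub>M N))"
      by (rule P.integral_fst') (rule bnd_integrable[OF P.prob_space_axioms fstm], rule gb)
    then have "(\<integral>p. g (fst p) \<partial>(M \<Otimes>\<^sub>M N)) = (\<integral>x. (\<integral>y. g x \<partial>N) \<partial>M)" by simp
    also have "\<dots> = integral\<^sup>L M g" by (simp add: pN.prob_space)
    finally show ?thesis by simp
  qed
  have e3: "(\<integral>y. min (2*B) (L * norm y) \<partial>N) = (\<integral>p. min (2*B) (L * norm (snd p)) \<partial>(M \<Otimes>\<^sub>M N))"
  proof -
    have "(\<integral>x. (\<integral>y. (\<lambda>p. min (2*B) (L * norm (snd p))) (x,y) \<partial>N) \<partial>M) = (\<integral>p. min (2*B) (L * norm (snd p)) \<partial>(M \<Otimes>\<^sub>M N))"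
      by (rule P.integral_fst') (rule bnd_integrable[OF P.prob_space_axioms sndm, where B="2*B"], use B0 L0 in auto)
    then have "(\<integral>p. min (2*B) (L * norm (snd p)) \<partial>(M \<Otimes>\<^sub>M N)) = (\<integral>x. (\<integral>y. min (2*B) (L * norm y) \<partial>N) \<partial>M)" by simp
    also have "\<dots> = (\<integral>y. min (2*B) (L * norm y) \<partial>N)" by (simp add: pM.prob_space)
    finally show ?thesis by simp
  qed
  have pt: "\<bar>g (fst p + snd p) - g (fst p)\<bar> \<le> min (2*B) (L * norm (snd p))" for p
  proof -
    have "dist (g (fst p + snd p)) (g (fst p)) \<le> L * dist (fst p + snd p) (fst p)"
      by (rule lipschitz_onD[OF gl]) auto
    then have "\<bar>g (fst p + snd p) - g (fst p)\<bar> \<le> L * dist (fst p + snd p) (fst p)"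
      by (simp add: dist_real_def)
    moreover have "\<bar>g (fst p + snd p) - g (fst p)\<bar> \<le> 2*B" using gb[of "fst p + snd p"] gb[of "fst p"] by linarith
    ultimately show ?thesis by (simp add: dist_norm)
  qed
  have "\<bar>(\<integral>p. g (fst p + snd p) \<partial>(M \<Otimes>\<^sub>M N)) - (\<integral>p. g (fst p) \<partial>(M \<Otimes>\<^sub>M N))\<bar>
        \<le> (\<integral>p. min (2*B) (L * norm (snd p)) \<partial>(M \<Otimes>\<^sub>M N))"
  proof -
    have i1: "integrable (M \<Otimes>\<^sub>M N) (\<lambda>p. g (fst p + snd p))"
      by (rule bnd_integrable[OF P.prob_space_axioms sumM], rule gb)
    have i2: "integrable (M \<Otimes>\<^sub>M N) (\<lambda>p. g (fst p))"
      by (rule bnd_integrable[OF P.prob_space_axioms fstm], rule gb)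
    have i3: "integrable (M \<Otimes>\<^sub>M N) (\<lambda>p. min (2*B) (L * norm (snd p)))"
      by (rule bnd_integrable[OF P.prob_space_axioms sndm, where B="2*B"], use B0 L0 in auto)
    have "(\<integral>p. g (fst p + snd p) \<partial>(M \<Otimes>\<^sub>M N)) - (\<integral>p. g (fst p) \<partial>(M \<Otimes>\<^sub>M N))
        = (\<integral>p. g (fst p + snd p) - g (fst p) \<partial>(M \<Otimes>\<^sub>M N))" using i1 i2 by simp
    also have "\<bar>\<dots>\<bar> \<le> (\<integral>p. \<bar>g (fst p + snd p) - g (fst p)\<bar> \<partial>(M \<Otimes>\<^sub>M N))" by (rule integral_abs_bound)
    also have "\<dots> \<le> (\<integral>p. min (2*B) (L * norm (snd p)) \<partial>(M \<Otimes>\<^sub>M N))"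
      by (rule integral_mono[OF Bochner_Integration.integrable_abs[OF Bochner_Integration.integrable_diff[OF i1 i2]] i3]) (rule pt)
    finally show ?thesis .
  qed
  then show ?thesis unfolding e1 e2 e3 .
qed



lemma ubp:
  fixes A :: "'i \<Rightarrow> 'a::{real_normed_vector, complete_space} \<Rightarrow> 'b::real_normed_vector"
  assumes lin: "\<And>i. i \<in> I \<Longrightarrow> bounded_linear (A i)"
    and pb: "\<And>x. \<exists>B. \<forall>i\<in>I. norm (A i x) \<le> B"
  shows "\<exists>K. \<forall>i\<in>I. \<forall>x. norm (A i x) \<le> K * norm x"
proof -
  define F where "F n = {x. \<forall>i\<in>I. norm (A i x) \<le> real n}" for n::nat
  have clo: "closed (F n)" for n
  proof -
    have "F n = (\<Inter>i\<in>I. {x. norm (A i x) \<le> real n})" by (auto simp: F_def)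
    moreover have "closed {x. norm (A i x) \<le> real n}" if "i \<in> I" for i
      using lin[OF that] by (intro closed_Collect_le continuous_intros linear_continuous_on) auto
    ultimately show ?thesis by (auto intro: closed_INT)
  qed
  have cov: "\<Union>(range F) = UNIV"
  proof -
    have "x \<in> \<Union>(range F)" for x
    proof -
      obtain B where B: "\<forall>i\<in>I. norm (A i x) \<le> B" using pb by blast
      have "B \<le> real (nat \<lceil>B\<rceil>)" by linarith
      then have "x \<in> F (nat \<lceil>B\<rceil>)" using B unfolding F_def by force
      then show "x \<in> \<Union>(range F)" by blast
    qed
    then show ?thesis by auto
  qed
  have "\<not> (\<forall>T\<in>range F. closedin euclidean T \<and> euclidean interior_of T = {})"
  proof
    assume "\<forall>T\<in>range F. closedin euclidean T \<and> euclidean interior_of T = {}"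
    then have "euclidean interior_of \<Union>(range F) = {}"
      using Baire_category_alt[of euclidean "range F"] completely_metrizable_space_euclidean by auto
    then show False using cov by simp
  qed
  then obtain n where "interior (F n) \<noteq> {}" using clo by auto
  then obtain x0 where "x0 \<in> interior (F n)" by blast
  then obtain r where r: "r > 0" "ball x0 r \<subseteq> F n" by (auto simp: mem_interior)
  have x0F: "x0 \<in> F n" using r by auto
  show ?thesis
  proof (intro exI ballI allI)
    fix i x assume i: "i \<in> I"
    interpret L: bounded_linear "A i" using lin[OF i] .
    show "norm (A i x) \<le> (4 * real n / r) * norm x"
    proof (cases "x = 0")
      case True then show ?thesis by (simp add: L.zero)
    next
      case False
      then have nx: "norm x > 0" by simp
      define c where "c = r / 2 / norm x"
      have c: "c > 0" using r nx by (simp add: c_def)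
      have ny: "norm (c *\<^sub>R x) = r/2" using nx r by (simp add: c_def)
      then have "x0 + c *\<^sub>R x \<in> F n" using r by (intro subsetD[OF r(2)]) (simp add: dist_norm)
      then have b1: "norm (A i (x0 + c *\<^sub>R x)) \<le> real n" using i by (auto simp: F_def)
      have b2: "norm (A i x0) \<le> real n" using x0F i by (auto simp: F_def)
      have "A i (c *\<^sub>R x) = A i (x0 + c *\<^sub>R x) - A i x0" by (simp add: L.add)
      then have "norm (A i (c *\<^sub>R x)) \<le> norm (A i (x0 + c *\<^sub>R x)) + norm (A i x0)"
        by (metis norm_triangle_ineq4)
      then have "norm (A i (c *\<^sub>R x)) \<le> 2 * real n"
        using b1 b2 by linarith
      then have "c * norm (A i x) \<le> 2 * real n" using c by (simp add: L.scale)
      then have "norm (A i x) \<le> 2 * real n / c" using c by (simp add: field_simps)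
      also have "2 * real n / c = (4 * real n / r) * norm x" using r nx by (simp add: c_def field_simps)
      finally show ?thesis .
    qed
  qed
qed

lemma parallelogram:
  fixes a b :: "'a::real_inner"
  shows "norm (a - b)^2 + norm (a + b)^2 = 2 * norm a^2 + 2 * norm b^2"
  by (simp add: power2_norm_eq_inner inner_simps algebra_simps)

lemma aux_quad:
  fixes p q c :: real
  assumes h: "2 * (p/c) * p \<le> (p/c)^2 * q" and c: "c = q + 1" and q: "0 \<le> q"
  shows "p = 0"
proof -
  have cp: "c > 0" using c q by simp
  have e1: "2*(p/c)*p*c^2 = 2*p^2*c" using cp by (simp add: power2_eq_square field_simps)
  have e2: "(p/c)^2*q*c^2 = p^2*q" using cp by (simp add: power2_eq_square field_simps)
  have "2*(p/c)*p*c^2 \<le> (p/c)^2*q*c^2" using mult_right_mono[OF h, of "c^2"] by simp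
  then have "2*p^2*c \<le> p^2*q" using e1 e2 by simp
  then have "p^2 * (q + 2) \<le> 0" using c by (simp add: algebra_simps)
  then have "p^2 \<le> 0" using q by (simp add: mult_le_0_iff)
  then show ?thesis by simp
qed

lemma riesz:
  fixes \<phi> :: "'a::{real_inner, complete_space} \<Rightarrow> real"
  assumes bl: "bounded_linear \<phi>"
  shows "\<exists>g. \<forall>x. \<phi> x = x \<bullet> g"
proof (cases "\<forall>x. \<phi> x = 0")
  case True then show ?thesis by (intro exI[of _ 0]) simp
next
  case False
  interpret L: bounded_linear \<phi> by fact
  obtain u where u: "\<phi> u \<noteq> 0" using False by blast
  define K where "K = {x. \<phi> x = 0}"
  have Kc: "closed K" unfolding K_def
    by (intro closed_Collect_eq continuous_intros linear_continuous_on bl)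
  have K0: "0 \<in> K" by (simp add: K_def L.zero)
  have Kadd: "x \<in> K \<Longrightarrow> y \<in> K \<Longrightarrow> x + y \<in> K" for x y by (simp add: K_def L.add)
  have Kscale: "x \<in> K \<Longrightarrow> c *\<^sub>R x \<in> K" for x c by (simp add: K_def L.scale)
  define S where "S = (\<lambda>k. norm (u - k)^2) ` K"
  define D where "D = Inf S"
  have bdd: "bdd_below S" unfolding S_def by (intro bdd_belowI[of _ 0]) auto
  have Sne: "S \<noteq> {}" using K0 S_def by auto
  have Dle: "k \<in> K \<Longrightarrow> D \<le> norm (u - k)^2" for k
    unfolding D_def S_def by (rule cInf_lower) (use bdd S_def in auto)
  have Dex: "e > 0 \<Longrightarrow> \<exists>k\<in>K. norm (u - k)^2 < D + e" for e
  proof -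
    assume e: "e > 0"
    have "Inf S < D + e" using e D_def by simp
    then obtain s where "s \<in> S" "s < D + e" using cInf_lessD[OF Sne] by blast
    then show ?thesis unfolding S_def by auto
  qed
  have D0: "0 \<le> D" unfolding D_def using Sne by (intro cInf_greatest) (auto simp: S_def)
  have "\<forall>n. \<exists>k. k \<in> K \<and> norm (u - k)^2 < D + inverse (real (Suc n))"
  proof
    fix n
    have "inverse (real (Suc n)) > 0" by simp
    then show "\<exists>k. k \<in> K \<and> norm (u - k)^2 < D + inverse (real (Suc n))" using Dex by blast
  qed
  then have "\<exists>k. \<forall>n. k n \<in> K \<and> norm (u - k n)^2 < D + inverse (real (Suc n))" by (rule choice)
  then obtain k where k: "\<And>n. k n \<in> K" "\<And>n. norm (u - k n)^2 < D + inverse (real (Suc n))"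
    by blast
  have par: "norm (k m - k n)^2 < 2 * inverse (real (Suc m)) + 2 * inverse (real (Suc n))" for m n
  proof -
    have mid: "(1/2) *\<^sub>R (k m + k n) \<in> K" using k by (intro Kscale Kadd)
    have "D \<le> norm (u - (1/2) *\<^sub>R (k m + k n))^2" using Dle[OF mid] .
    moreover have "norm (k m - k n)^2 = 2 * norm (u - k m)^2 + 2 * norm (u - k n)^2 - 4 * norm (u - (1/2) *\<^sub>R (k m + k n))^2"
      by (simp add: power2_norm_eq_inner inner_simps algebra_simps)
    ultimately have "norm (k m - k n)^2 \<le> 2 * norm (u - k m)^2 + 2 * norm (u - k n)^2 - 4 * D"
      by linarith
    then show ?thesis using k(2)[of m] k(2)[of n] by linarith
  qed
  have "Cauchy k"
  proof (rule metric_CauchyI)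
    fix e :: real assume e: "e > 0"
    obtain N where N: "inverse (real (Suc N)) < e^2 / 4"
      using reals_Archimedean[of "e^2/4"] e by auto
    show "\<exists>M. \<forall>m\<ge>M. \<forall>n\<ge>M. dist (k m) (k n) < e"
    proof (intro exI allI impI)
      fix m n assume mn: "N \<le> m" "N \<le> n"
      have "inverse (real (Suc m)) \<le> inverse (real (Suc N))" "inverse (real (Suc n)) \<le> inverse (real (Suc N))"
        using mn by (auto intro!: le_imp_inverse_le)
      then have "norm (k m - k n)^2 < e^2" using par[of m n] N by linarith
      then show "dist (k m) (k n) < e" using e by (simp add: dist_norm power_less_imp_less_base)
    qed
  qed
  then obtain k0 where k0: "k \<longlonglongrightarrow> k0" using Cauchy_convergent_iff convergent_def by blast
  have k0K: "k0 \<in> K" using closed_sequentially[OF Kc] k0 k(1) by blast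
  have "norm (u - k0)^2 \<le> D"
  proof (rule LIMSEQ_le[of "\<lambda>n. norm (u - k n)^2" _ "\<lambda>n. D + inverse (real (Suc n))"])
    show "(\<lambda>n. norm (u - k n)^2) \<longlonglongrightarrow> norm (u - k0)^2" by (intro tendsto_intros k0)
    show "(\<lambda>n. D + inverse (real (Suc n))) \<longlonglongrightarrow> D"
      using tendsto_add[OF tendsto_const LIMSEQ_inverse_real_of_nat] by simp
    show "\<exists>N. \<forall>n\<ge>N. norm (u - k n)^2 \<le> D + inverse (real (Suc n))" using k(2) less_imp_le by blast
  qed
  define v where "v = u - k0"
  have vmin: "norm v^2 \<le> norm (v - t *\<^sub>R w)^2" if "w \<in> K" for t w
  proof -
    have "k0 + t *\<^sub>R w \<in> K" using k0K that by (intro Kadd Kscale)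
    then have "D \<le> norm (u - (k0 + t *\<^sub>R w))^2" by (rule Dle)
    then have "norm (u - k0)^2 \<le> norm (u - (k0 + t *\<^sub>R w))^2" using \<open>norm (u - k0)^2 \<le> D\<close> by linarith
    moreover have "u - (k0 + t *\<^sub>R w) = v - t *\<^sub>R w" by (simp add: v_def)
    ultimately show ?thesis by (metis v_def)
  qed
  have orth: "v \<bullet> w = 0" if w: "w \<in> K" for w
  proof -
    define t where "t = (v \<bullet> w) / (norm w^2 + 1)"
    have "norm v^2 \<le> norm (v - t *\<^sub>R w)^2" by (rule vmin[OF w])
    also have "norm (v - t *\<^sub>R w)^2 = norm v^2 - 2 * t * (v \<bullet> w) + t^2 * norm w^2"
      unfolding power2_norm_eq_inner by (simp add: inner_simps algebra_simps power2_eq_square inner_commute)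
    finally have "2 * t * (v \<bullet> w) \<le> t^2 * norm w^2" by simp
    then show "v \<bullet> w = 0" unfolding t_def by (rule aux_quad) auto
  qed
  have pv: "\<phi> v = \<phi> u" using k0K by (simp add: v_def K_def L.diff)
  have vv: "v \<bullet> v \<noteq> 0" using pv u by (auto simp: L.zero)
  show ?thesis
  proof (intro exI allI)
    fix x
    have "x - (\<phi> x / \<phi> v) *\<^sub>R v \<in> K" using pv u by (simp add: K_def L.diff L.scale)
    then have "v \<bullet> (x - (\<phi> x / \<phi> v) *\<^sub>R v) = 0" by (rule orth)
    then have "v \<bullet> x = (\<phi> x / \<phi> v) * (v \<bullet> v)" by (simp add: inner_simps)
    then have "x \<bullet> v = (\<phi> x / \<phi> v) * (v \<bullet> v)" by (simp add: inner_commute)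
    then show "\<phi> x = x \<bullet> ((\<phi> v / (v \<bullet> v)) *\<^sub>R v)" using pv u vv by (simp add: field_simps)
  qed
qed



lemma wc_bl:
  fixes A :: "'a::{real_inner, complete_space} \<Rightarrow> 'a"
  assumes A: "bounded_linear A" and w: "weakly_convergent_to xs x"
  shows "weakly_convergent_to (\<lambda>n. A (xs n)) (A x)"
  unfolding weakly_convergent_to_def
proof
  fix h
  have "bounded_linear (\<lambda>y. A y \<bullet> h)"
    using bounded_linear_compose[OF bounded_linear_inner_left A] .
  then obtain g where g: "\<And>y. A y \<bullet> h = y \<bullet> g" using riesz by blast
  show "(\<lambda>n. A (xs n) \<bullet> h) \<longlonglongrightarrow> A x \<bullet> h"
    unfolding g using w by (simp add: weakly_convergent_to_def)
qed

lemma wc_add: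
  assumes "weakly_convergent_to xs x"
  shows "weakly_convergent_to (\<lambda>n. xs n + y) (x + y)"
  unfolding weakly_convergent_to_def inner_add_left
proof
  fix h
  have "(\<lambda>n. xs n \<bullet> h) \<longlonglongrightarrow> x \<bullet> h" using assms unfolding weakly_convergent_to_def by blast
  then show "(\<lambda>n. xs n \<bullet> h + y \<bullet> h) \<longlonglongrightarrow> x \<bullet> h + y \<bullet> h" by (rule tendsto_add[OF _ tendsto_const])
qed

lemma wc_of_conv:
  assumes "xs \<longlonglongrightarrow> x"
  shows "weakly_convergent_to xs x"
  unfolding weakly_convergent_to_def using tendsto_inner[OF assms tendsto_const] by blast

lemma wc_bounded:
  fixes xs :: "nat \<Rightarrow> 'a::{real_inner, complete_space}"
  assumes w: "weakly_convergent_to xs x"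
  shows "\<exists>R. \<forall>n. norm (xs n) \<le> R"
proof -
  have "\<exists>K. \<forall>n\<in>UNIV. \<forall>y. norm (xs n \<bullet> y) \<le> K * norm y"
  proof (rule ubp)
    show "bounded_linear (\<lambda>y. xs n \<bullet> y)" for n by (rule bounded_linear_inner_right)
    fix y
    have "convergent (\<lambda>n. xs n \<bullet> y)" using w unfolding weakly_convergent_to_def convergent_def by blast
    then have "Bseq (\<lambda>n. xs n \<bullet> y)" by (rule convergent_imp_Bseq)
    then show "\<exists>B. \<forall>n\<in>UNIV. norm (xs n \<bullet> y) \<le> B" unfolding Bseq_def by blast
  qed
  then obtain K where K: "\<And>n y. norm (xs n \<bullet> y) \<le> K * norm y" by blast
  have "norm (xs n) \<le> max K 0" for n
  proof (cases "xs n = 0")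
    case True then show ?thesis by simp
  next
    case False
    have "norm (xs n) * norm (xs n) = norm (xs n \<bullet> xs n)" by (simp add: power2_eq_square[symmetric] power2_norm_eq_inner)
    also have "\<dots> \<le> K * norm (xs n)" by (rule K)
    finally have "norm (xs n) \<le> K" using False by (simp add: mult_le_cancel_right)
    then show ?thesis by simp
  qed
  then show ?thesis by blast
qed

lemma wc_unique:
  fixes xs :: "nat \<Rightarrow> 'a::real_inner"
  assumes "weakly_convergent_to xs x" "xs \<longlonglongrightarrow> y"
  shows "x = y"
proof -
  have "(\<lambda>n. xs n \<bullet> (x - y)) \<longlonglongrightarrow> x \<bullet> (x - y)" using assms(1) by (simp add: weakly_convergent_to_def)
  moreover have "(\<lambda>n. xs n \<bullet> (x - y)) \<longlonglongrightarrow> y \<bullet> (x - y)" using tendsto_inner[OF assms(2) tendsto_const] .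
  ultimately have "x \<bullet> (x - y) = y \<bullet> (x - y)" by (rule LIMSEQ_unique)
  then have "(x - y) \<bullet> (x - y) = 0" by (simp add: inner_diff_left)
  then show ?thesis by simp
qed

lemma wc_subseq:
  assumes "weakly_convergent_to xs x" "strict_mono r"
  shows "weakly_convergent_to (\<lambda>n. xs (r n)) x"
  using assms LIMSEQ_subseq_LIMSEQ[of _ _ r] unfolding weakly_convergent_to_def o_def by blast

lemma compact_conv:
  fixes A :: "'a::{real_inner, complete_space} \<Rightarrow> 'a"
  assumes cA: "compact_operator A" and w: "weakly_convergent_to xs x"
  shows "(\<lambda>n. A (xs n)) \<longlonglongrightarrow> A x"
proof (rule ccontr)
  assume nc: "\<not> (\<lambda>n. A (xs n)) \<longlonglongrightarrow> A x"
  have A: "bounded_linear A" and C: "compact (closure (A ` ball 0 1))"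
    using cA by (auto simp: compact_operator_def)
  interpret L: bounded_linear A by fact
  obtain R where R: "\<And>n. norm (xs n) \<le> R" using wc_bounded[OF w] by blast
  define c where "c = max R 0 + 1"
  have c0: "c > 0" by (simp add: c_def)
  have cn: "norm (xs n) < c" for n
  proof -
    have "R \<le> max R 0" by simp
    then show ?thesis using R[of n] unfolding c_def by linarith
  qed
  note c = c0 cn
  obtain e where e: "e > 0" "\<And>N. \<exists>n\<ge>N. e \<le> dist (A (xs n)) (A x)"
  proof -
    have "\<exists>e>0. \<forall>N. \<exists>n\<ge>N. e \<le> dist (A (xs n)) (A x)"
      using nc unfolding LIMSEQ_def by (simp add: not_less)
    then show ?thesis using that by blast
  qed
  have "infinite {n. e \<le> dist (A (xs n)) (A x)}"
    unfolding infinite_nat_iff_unbounded_le using e(2) by blast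
  then obtain r :: "nat \<Rightarrow> nat" where r: "strict_mono r" "\<And>n. e \<le> dist (A (xs (r n))) (A x)"
    using infinite_enumerate by blast
  define y where "y n = A ((1/c) *\<^sub>R xs (r n))" for n
  have yC: "y n \<in> closure (A ` ball 0 1)" for n
  proof -
    have pc: "0 < 1/c" using c(1) by simp
    have e1: "norm ((1/c) *\<^sub>R xs (r n)) = (1/c) * norm (xs (r n))"
      by (simp only: norm_scaleR abs_of_pos[OF pc])
    have "(1/c) * norm (xs (r n)) < (1/c) * c" by (rule mult_strict_left_mono[OF c(2) pc])
    also have "(1/c) * c = 1" using c(1) by simp
    finally have "norm ((1/c) *\<^sub>R xs (r n)) < 1" unfolding e1 .
    then have "(1/c) *\<^sub>R xs (r n) \<in> ball 0 1" unfolding mem_ball_0 .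
    then have "A ((1/c) *\<^sub>R xs (r n)) \<in> A ` ball 0 1" by (rule imageI)
    then have "A ((1/c) *\<^sub>R xs (r n)) \<in> closure (A ` ball 0 1)" by (rule subsetD[OF closure_subset])
    then show ?thesis by (simp only: y_def)
  qed
  have sc: "seq_compact (closure (A ` ball 0 1))" by (rule compact_imp_seq_compact[OF C])
  have yC': "\<forall>n. y n \<in> closure (A ` ball 0 1)" using yC by blast
  obtain l s where l: "strict_mono s" "(y \<circ> s) \<longlonglongrightarrow> l"
    using mp[OF spec[OF sc[unfolded seq_compact_def], of y] yC'] by blast
  have ys: "A (xs (r (s k))) = c *\<^sub>R y (s k)" for k
    using c by (simp add: y_def L.scale)
  have lim: "(\<lambda>k. A (xs (r (s k)))) \<longlonglongrightarrow> c *\<^sub>R l"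
    unfolding ys using tendsto_scaleR[OF tendsto_const l(2)[unfolded o_def]] .
  have wk: "weakly_convergent_to (\<lambda>k. A (xs (r (s k)))) (A x)"
    using wc_bl[OF A wc_subseq[OF wc_subseq[OF w r(1)] l(1)]] .
  have "A x = c *\<^sub>R l" using wc_unique[OF wk lim] .
  then have "(\<lambda>k. A (xs (r (s k)))) \<longlonglongrightarrow> A x" using lim by simp
  then obtain N where "\<And>k. k \<ge> N \<Longrightarrow> dist (A (xs (r (s k)))) (A x) < e"
    using e(1) unfolding LIMSEQ_def by blast
  then have "dist (A (xs (r (s N)))) (A x) < e" by simp
  then show False using r(2)[of "s N"] by simp
qed



context
  fixes T :: "real \<Rightarrow> 'a::{real_inner, complete_space, second_countable_topology} \<Rightarrow> 'a"
    and \<mu> :: "real \<Rightarrow> 'a measure"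
  assumes sg: "strongly_continuous_semigroup T"
    and prob: "\<And>t. t \<ge> 0 \<Longrightarrow> prob_space (\<mu> t)"
    and sets_mu: "\<And>t. t \<ge> 0 \<Longrightarrow> sets (\<mu> t) = sets borel"
    and mu0: "\<mu> 0 = return borel 0"
    and lim0: "weak_conv_at_0 \<mu> (\<mu> 0)"
    and conv: "\<And>s t. s \<ge> 0 \<Longrightarrow> t \<ge> 0 \<Longrightarrow>
                 \<mu> (t + s) = meas_conv (distr (\<mu> t) borel (T s)) (\<mu> s)"
begin

lemma Tbl: "t \<ge> 0 \<Longrightarrow> bounded_linear (T t)"
  using sg by (simp add: strongly_continuous_semigroup_def)

lemma Tcont: "continuous_on {0..} (\<lambda>t. T t x)"
  using sg by (simp add: strongly_continuous_semigroup_def)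

lemma Tcontx: "t \<ge> 0 \<Longrightarrow> continuous_on UNIV (T t)"
  using Tbl linear_continuous_on by blast

lemma Tmeas: "t \<ge> 0 \<Longrightarrow> sets M = sets borel \<Longrightarrow> T t \<in> measurable M borel"
  using Tcontx cont_meas by blast

lemma Tbound: "\<exists>K. \<forall>t\<in>{0..R}. \<forall>x. norm (T t x) \<le> K * norm x"
proof (rule ubp)
  show "\<And>t. t \<in> {0..R} \<Longrightarrow> bounded_linear (T t)" using Tbl by auto
  fix x
  have "compact ((\<lambda>t. T t x) ` {0..R})"
    by (intro compact_continuous_image continuous_on_subset[OF Tcont]) auto
  then obtain B where "\<forall>y\<in>(\<lambda>t. T t x) ` {0..R}. norm y \<le> B"
    using compact_imp_bounded bounded_iff by metis
  then show "\<exists>B. \<forall>t\<in>{0..R}. norm (T t x) \<le> B" by auto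
qed

lemma lim0': 
  fixes g :: "'a \<Rightarrow> real"
  assumes "continuous_on UNIV g" "\<And>y. \<bar>g y\<bar> \<le> B"
  shows "((\<lambda>t. integral\<^sup>L (\<mu> t) g) \<longlongrightarrow> g 0) (at_right 0)"
proof -
  have "bounded (range g)" using assms(2) by (auto simp: bounded_iff)
  then have "((\<lambda>t. integral\<^sup>L (\<mu> t) g) \<longlongrightarrow> integral\<^sup>L (\<mu> 0) g) (at_right 0)"
    using lim0 assms(1) by (auto simp: weak_conv_at_0_def)
  moreover have "integral\<^sup>L (\<mu> 0) g = g 0" unfolding mu0
    by (rule integral_return) (auto intro: borel_measurable_continuous_onI assms(1))
  ultimately show ?thesis by simp
qed

lemma Gcont:
  fixes g :: "'a \<Rightarrow> real"
  assumes gb: "\<And>y. \<bar>g y\<bar> \<le> B" and gl: "L-lipschitz_on UNIV g" and t0: "0 \<le> t0" and e: "0 < e"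
  shows "\<exists>d>0. \<forall>s\<ge>0. \<bar>s - t0\<bar> < d \<longrightarrow> \<bar>integral\<^sup>L (\<mu> s) g - integral\<^sup>L (\<mu> t0) g\<bar> < e"
proof -
  have gc: "continuous_on UNIV g" using gl by (rule lipschitz_on_continuous_on)
  have B0: "0 \<le> B" using gb[of 0] by auto
  have L0: "0 \<le> L" using gl lipschitz_on_nonneg by blast
  show ?thesis
  proof (cases "t0 = 0")
    case True
    have "\<forall>\<^sub>F t in at_right 0. dist (integral\<^sup>L (\<mu> t) g) (g 0) < e"
      by (rule tendsto_iff[THEN iffD1, OF lim0'[OF gc gb], rule_format, OF e])
    then obtain b where b: "b > 0" "\<And>y. y > 0 \<Longrightarrow> y < b \<Longrightarrow> dist (integral\<^sup>L (\<mu> y) g) (g 0) < e"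
      by (auto simp: eventually_at_right_field)
    have G0: "integral\<^sup>L (\<mu> 0) g = g 0" using lim0'[OF gc gb] mu0
      by (simp add: integral_return borel_measurable_continuous_onI gc)
    show ?thesis
    proof (intro exI[of _ b] conjI allI impI)
      fix s :: real assume s: "0 \<le> s" "\<bar>s - t0\<bar> < b"
      show "\<bar>integral\<^sup>L (\<mu> s) g - integral\<^sup>L (\<mu> t0) g\<bar> < e"
      proof (cases "s = 0")
        case True then show ?thesis using e \<open>t0 = 0\<close> by simp
      next
        case False
        then show ?thesis using b(2)[of s] s \<open>t0 = 0\<close> G0 by (simp add: dist_real_def)
      qed
    qed (use b in auto)
  next
    case False
    then have t0p: "t0 > 0" using t0 by simp
    define \<phi> where "\<phi> = (\<lambda>y::'a. min (2*B) (L * norm y))"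
    have \<phi>c: "continuous_on UNIV \<phi>" unfolding \<phi>_def by (intro continuous_intros)
    have \<phi>b: "\<bar>\<phi> y\<bar> \<le> 2*B" for y using B0 L0 by (simp add: \<phi>_def)
    have \<phi>0: "\<phi> 0 = 0" using B0 by (simp add: \<phi>_def)
    have "\<forall>\<^sub>F t in at_right 0. dist (integral\<^sup>L (\<mu> t) \<phi>) (\<phi> 0) < e/3"
      by (rule tendsto_iff[THEN iffD1, OF lim0'[OF \<phi>c \<phi>b], rule_format]) (use e in simp)
    then obtain b where b: "b > 0" "\<And>r. r > 0 \<Longrightarrow> r < b \<Longrightarrow> \<bar>integral\<^sup>L (\<mu> r) \<phi>\<bar> < e/3"
      by (auto simp: eventually_at_right_field dist_real_def \<phi>0)
    define \<epsilon> where "\<epsilon> = min (b/2) (t0/2)"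
    define a where "a = t0 - \<epsilon>"
    have \<epsilon>: "\<epsilon> > 0" "\<epsilon> < b" "\<epsilon> \<le> b/2" using b t0p by (auto simp: \<epsilon>_def)
    have a: "a > 0" using t0p by (auto simp: a_def \<epsilon>_def)
    define H where "H s = (\<integral>w. g (T (s - a) w) \<partial>\<mu> a)" for s
    have gm: "g \<in> borel_measurable borel" using gc by (rule borel_measurable_continuous_onI)
    have key: "\<bar>integral\<^sup>L (\<mu> s) g - H s\<bar> < e/3" if s: "a < s" "s < a + b" for s
    proof -
      define r where "r = s - a"
      have r: "0 < r" "r < b" using s by (auto simp: r_def)
      have sr: "s = a + r" by (simp add: r_def)
      have mus: "\<mu> s = meas_conv (distr (\<mu> a) borel (T r)) (\<mu> r)"
        unfolding sr using conv[of r a] r a by simp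
      have Tm: "T r \<in> measurable (\<mu> a) borel" using Tmeas r a sets_mu by auto
      have pd: "prob_space (distr (\<mu> a) borel (T r))"
        using prob_space.prob_space_distr[OF prob Tm] a by simp
      have "\<bar>integral\<^sup>L (meas_conv (distr (\<mu> a) borel (T r)) (\<mu> r)) g - integral\<^sup>L (distr (\<mu> a) borel (T r)) g\<bar>
            \<le> integral\<^sup>L (\<mu> r) \<phi>"
        unfolding \<phi>_def
        by (rule conv_bound[OF pd _ prob sets_mu gb gl]) (use r in auto)
      moreover have "integral\<^sup>L (distr (\<mu> a) borel (T r)) g = H s"
        unfolding H_def r_def[symmetric] by (rule integral_distr[OF Tm gm])
      ultimately show ?thesis using b(2)[OF r] mus by simp
    qed
    have Hlim: "(H \<longlongrightarrow> H t0) (at t0 within {a..})"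
    proof (subst tendsto_at_iff_sequentially, intro allI impI)
      fix X :: "nat \<Rightarrow> real" assume X1: "\<forall>i. X i \<in> {a..} - {t0}" and X2: "X \<longlonglongrightarrow> t0"
      note X = X1 X2
      have Xa: "X n - a \<ge> 0" for n using X by auto
      show "(H \<circ> X) \<longlonglongrightarrow> H t0" unfolding o_def H_def
      proof (rule dct_bnd[OF prob[OF less_imp_le[OF a]], where B=B])
        show "(\<lambda>w. g (T (X n - a) w)) \<in> borel_measurable (\<mu> a)" for n
          using a Xa[of n] sets_mu
          by (intro cont_meas continuous_on_compose2[OF gc Tcontx]) auto
        show "(\<lambda>w. g (T (t0 - a) w)) \<in> borel_measurable (\<mu> a)"
          using a t0p sets_mu \<epsilon>
          by (intro cont_meas continuous_on_compose2[OF gc Tcontx]) (auto simp: a_def)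
        show "\<bar>g (T (X n - a) w)\<bar> \<le> B" for n w by (rule gb)
        fix w
        have "(\<lambda>n. X n - a) \<longlonglongrightarrow> t0 - a" using X by (intro tendsto_intros) auto
        then have "(\<lambda>n. T (X n - a) w) \<longlonglongrightarrow> T (t0 - a) w"
          by (rule continuous_on_tendsto_compose[OF Tcont]) (use Xa \<epsilon> in \<open>auto simp: a_def\<close>)
        then show "(\<lambda>n. g (T (X n - a) w)) \<longlonglongrightarrow> g (T (t0 - a) w)"
          by (rule continuous_on_tendsto_compose[OF gc]) auto
      qed
    qed
    have "\<forall>\<^sub>F s in at t0 within {a..}. dist (H s) (H t0) < e/3"
      by (rule tendsto_iff[THEN iffD1, OF Hlim, rule_format]) (use e in simp)
    then obtain d1 where d1: "d1 > 0" "\<And>s. s \<in> {a..} \<Longrightarrow> s \<noteq> t0 \<Longrightarrow> dist s t0 < d1 \<Longrightarrow> dist (H s) (H t0) < e/3"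
      by (auto simp: eventually_at)
    show ?thesis
    proof (intro exI[of _ "min d1 \<epsilon>"] conjI allI impI)
      show "min d1 \<epsilon> > 0" using d1 \<epsilon> by simp
      fix s :: real assume s: "0 \<le> s" "\<bar>s - t0\<bar> < min d1 \<epsilon>"
      have s1: "a < s" "s < a + b" using s \<epsilon> by (auto simp: a_def)
      have t1: "a < t0" "t0 < a + b" using \<epsilon> by (auto simp: a_def)
      have hd: "\<bar>H s - H t0\<bar> < e/3"
      proof (cases "s = t0")
        case True then show ?thesis using e by simp
      next
        case False then show ?thesis using d1(2)[of s] s s1 by (simp add: dist_real_def)
      qed
      show "\<bar>integral\<^sup>L (\<mu> s) g - integral\<^sup>L (\<mu> t0) g\<bar> < e"
        using key[OF s1] key[OF t1] hd by (simp only: abs_less_iff) linarith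
    qed
  qed
qed


lemma Pmeas:
  assumes t: "t \<ge> 0" and fc: "continuous_on UNIV f"
  shows "(\<lambda>y. f (T t x + y)) \<in> borel_measurable (\<mu> t)"
proof -
  have "continuous_on UNIV (\<lambda>y. T t x + y)" by (intro continuous_intros)
  then have "continuous_on UNIV (\<lambda>y. f (T t x + y))" by (rule continuous_on_compose2[OF fc]) simp
  then show ?thesis by (rule cont_meas[OF sets_mu[OF t]])
qed

lemma Pbnd:
  assumes t: "t \<ge> 0" and fc: "continuous_on UNIV f" and fb: "\<And>y. \<bar>f y\<bar> \<le> B"
  shows "\<bar>transition_op T \<mu> t f x\<bar> \<le> B"
  unfolding transition_op_def by (rule bnd_integral[OF prob[OF t] Pmeas[OF t fc] fb])

lemma Pbounded:
  assumes t: "t \<ge> 0" and fc: "continuous_on UNIV f" and fb: "\<And>y. \<bar>f y\<bar> \<le> B"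
  shows "bounded (range (transition_op T \<mu> t f))"
  unfolding bounded_iff
proof (intro exI ballI)
  fix z assume "z \<in> range (transition_op T \<mu> t f)"
  then obtain x where "z = transition_op T \<mu> t f x" by blast
  then show "norm z \<le> B" using Pbnd[OF t fc fb, of x] by simp
qed

lemma Pseq:
  assumes t: "t \<ge> 0" and fc: "continuous_on UNIV f" and fb: "\<And>y. \<bar>f y\<bar> \<le> B"
    and lim: "\<And>y. (\<lambda>n. f (T t (xs n) + y)) \<longlonglongrightarrow> f (T t x + y)"
  shows "(\<lambda>n. transition_op T \<mu> t f (xs n)) \<longlonglongrightarrow> transition_op T \<mu> t f x"
  unfolding transition_op_def
proof (rule dct_bnd[OF prob[OF t], where B=B])
  show "(\<lambda>y. f (T t (xs n) + y)) \<in> borel_measurable (\<mu> t)" for n by (rule Pmeas[OF t fc])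
  show "(\<lambda>y. f (T t x + y)) \<in> borel_measurable (\<mu> t)" by (rule Pmeas[OF t fc])
  show "\<bar>f (T t (xs n) + y)\<bar> \<le> B" for n y by (rule fb)
  show "(\<lambda>n. f (T t (xs n) + y)) \<longlonglongrightarrow> f (T t x + y)" for y by (rule lim)
qed

lemma norm_conv_lim:
  assumes t: "t \<ge> 0" and fc: "continuous_on UNIV f" and lim: "(\<lambda>n. T t (xs n)) \<longlonglongrightarrow> T t x"
  shows "(\<lambda>n. f (T t (xs n) + y)) \<longlonglongrightarrow> f (T t x + y)"
proof -
  have "(\<lambda>n. T t (xs n) + y) \<longlonglongrightarrow> T t x + y" by (rule tendsto_add[OF lim tendsto_const])
  then show ?thesis by (rule continuous_on_tendsto_compose[OF fc]) simp_all
qed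

lemma LipD:
  assumes "f \<in> Lip_b"
  obtains B L where "\<And>y. \<bar>f y\<bar> \<le> B" "L-lipschitz_on UNIV f"
proof -
  from assms obtain a L where a: "\<forall>z\<in>range f. norm z \<le> a" and L: "L-lipschitz_on UNIV f"
    unfolding Lip_b_def bounded_iff by blast
  have "\<bar>f y\<bar> \<le> a" for y using a by simp
  then show ?thesis using L that by blast
qed

lemma CbD:
  assumes "f \<in> C_b"
  obtains B where "\<And>y. \<bar>f y\<bar> \<le> B" "continuous_on UNIV f"
proof -
  from assms obtain a where a: "\<forall>z\<in>range f. norm z \<le> a" and c: "continuous_on UNIV f"
    unfolding C_b_def bounded_iff by blast
  have "\<bar>f y\<bar> \<le> a" for y using a by simp
  then show ?thesis using c that by blast
qed

lemma CswD:
  assumes "f \<in> C_b_sigma_w"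
  obtains B where "\<And>y. \<bar>f y\<bar> \<le> B" "\<And>xs x. weakly_convergent_to xs x \<Longrightarrow> (\<lambda>n. f (xs n)) \<longlonglongrightarrow> f x"
proof -
  from assms obtain a where a: "\<forall>z\<in>range f. norm z \<le> a"
     and c: "\<forall>xs x. weakly_convergent_to xs x \<longrightarrow> (\<lambda>n. f (xs n)) \<longlonglongrightarrow> f x"
    unfolding C_b_sigma_w_def bounded_iff by blast
  have "\<bar>f y\<bar> \<le> a" for y using a by simp
  then show ?thesis using c that by blast
qed

lemma Plip:
  assumes t: "t > 0" and f: "f \<in> Lip_b"
  shows "transition_op T \<mu> t f \<in> Lip_b"
proof -
  obtain B L where fb: "\<And>y. \<bar>f y\<bar> \<le> B" and fl: "L-lipschitz_on UNIV f" using LipD[OF f] by blast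
  have fc: "continuous_on UNIV f" using fl by (rule lipschitz_on_continuous_on)
  have L0: "0 \<le> L" using fl lipschitz_on_nonneg by blast
  have t0: "t \<ge> 0" using t by simp
  interpret TL: bounded_linear "T t" using Tbl[OF t0] .
  obtain K where K: "K > 0" "\<And>x. norm (T t x) \<le> norm x * K" using TL.pos_bounded by blast
  have "(L * K)-lipschitz_on UNIV (transition_op T \<mu> t f)"
  proof (rule lipschitz_onI)
    fix x y :: 'a assume "x \<in> UNIV" "y \<in> UNIV"
    have pt: "\<bar>f (T t x + z) - f (T t y + z)\<bar> \<le> L * norm (T t x - T t y)" for z
    proof -
      have "dist (f (T t x + z)) (f (T t y + z)) \<le> L * dist (T t x + z) (T t y + z)"
        by (rule lipschitz_onD[OF fl]) auto
      then show ?thesis by (simp add: dist_real_def dist_norm)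
    qed
    have "\<bar>transition_op T \<mu> t f x - transition_op T \<mu> t f y\<bar> \<le> L * norm (T t x - T t y)"
      unfolding transition_op_def by (rule diff_integral[OF prob[OF t0] Pmeas[OF t0 fc] Pmeas[OF t0 fc] fb fb pt])
    also have "norm (T t x - T t y) = norm (T t (x - y))" by (simp add: TL.diff)
    also have "L * norm (T t (x - y)) \<le> L * (norm (x - y) * K)" by (rule mult_left_mono[OF K(2) L0])
    also have "\<dots> = (L * K) * dist x y" by (simp add: dist_norm)
    finally show "dist (transition_op T \<mu> t f x) (transition_op T \<mu> t f y) \<le> (L * K) * dist x y"
      by (simp add: dist_real_def)
  next
    show "0 \<le> L * K" using L0 K(1) by simp
  qed
  then show ?thesis using Pbounded[OF t0 fc fb] unfolding Lip_b_def by blast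
qed

lemma PCb:
  assumes t: "t > 0" and f: "f \<in> C_b"
  shows "transition_op T \<mu> t f \<in> C_b"
proof -
  obtain B where fb: "\<And>y. \<bar>f y\<bar> \<le> B" and fc: "continuous_on UNIV f" using CbD[OF f] by blast
  have t0: "t \<ge> 0" using t by simp
  have "continuous_on UNIV (transition_op T \<mu> t f)"
  proof (rule continuous_on_sequentiallyI)
    fix u :: "nat \<Rightarrow> 'a" and a assume "u \<longlonglongrightarrow> a"
    then have "(\<lambda>n. T t (u n)) \<longlonglongrightarrow> T t a" by (rule continuous_on_tendsto_compose[OF Tcontx[OF t0]]) simp_all
    then show "(\<lambda>n. transition_op T \<mu> t f (u n)) \<longlonglongrightarrow> transition_op T \<mu> t f a"
      by (intro Pseq[OF t0 fc fb] norm_conv_lim[OF t0 fc])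
  qed
  then show ?thesis using Pbounded[OF t0 fc fb] unfolding C_b_def by blast
qed

lemma Psw:
  assumes t: "t > 0" and f: "f \<in> C_b_sigma_w"
  shows "transition_op T \<mu> t f \<in> C_b_sigma_w"
proof -
  obtain B where fb: "\<And>y. \<bar>f y\<bar> \<le> B"
    and fw: "\<And>xs x. weakly_convergent_to xs x \<Longrightarrow> (\<lambda>n. f (xs n)) \<longlonglongrightarrow> f x" using CswD[OF f] by blast
  have t0: "t \<ge> 0" using t by simp
  have fc: "continuous_on UNIV f"
  proof (rule continuous_on_sequentiallyI)
    fix u :: "nat \<Rightarrow> 'a" and a assume "u \<longlonglongrightarrow> a"
    then show "(\<lambda>n. f (u n)) \<longlonglongrightarrow> f a" by (intro fw wc_of_conv)
  qed
  have "(\<lambda>n. transition_op T \<mu> t f (xs n)) \<longlonglongrightarrow> transition_op T \<mu> t f x"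
    if w: "weakly_convergent_to xs x" for xs x
  proof (rule Pseq[OF t0 fc fb])
    fix y
    show "(\<lambda>n. f (T t (xs n) + y)) \<longlonglongrightarrow> f (T t x + y)"
      by (rule fw[OF wc_add[OF wc_bl[OF Tbl[OF t0] w]]])
  qed
  then show ?thesis using Pbounded[OF t0 fc fb] unfolding C_b_sigma_w_def by blast
qed

lemma Pcomp:
  assumes t: "t > 0" and cT: "compact_operator (T t)" and f: "f \<in> C_b"
  shows "transition_op T \<mu> t f \<in> C_b_sigma_w"
proof -
  obtain B where fb: "\<And>y. \<bar>f y\<bar> \<le> B" and fc: "continuous_on UNIV f" using CbD[OF f] by blast
  have t0: "t \<ge> 0" using t by simp
  have "(\<lambda>n. transition_op T \<mu> t f (xs n)) \<longlonglongrightarrow> transition_op T \<mu> t f x"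
    if w: "weakly_convergent_to xs x" for xs x
    by (intro Pseq[OF t0 fc fb] norm_conv_lim[OF t0 fc] compact_conv[OF cT w])
  then show ?thesis using Pbounded[OF t0 fc fb] unfolding C_b_sigma_w_def by blast
qed

lemma Pcont:
  assumes f: "f \<in> Lip_b"
  shows "continuous_on ({0..} \<times> UNIV) (\<lambda>(t, x). transition_op T \<mu> t f x)"
proof -
  obtain B L where fb: "\<And>y. \<bar>f y\<bar> \<le> B" and fl: "L-lipschitz_on UNIV f" using LipD[OF f] by blast
  have fc: "continuous_on UNIV f" using fl by (rule lipschitz_on_continuous_on)
  have L0: "0 \<le> L" using fl lipschitz_on_nonneg by blast
  show ?thesis unfolding continuous_on_iff
  proof (intro ballI allI impI)
    fix p :: "real \<times> 'a" and e :: real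
    assume p: "p \<in> {0..} \<times> UNIV" and e: "0 < e"
    obtain t0 x0 where px: "p = (t0, x0)" by (cases p)
    have t0: "0 \<le> t0" using p px by auto
    have t0': "t0 \<in> {0..}" using t0 by simp
    obtain K where K: "\<forall>t\<in>{0..t0+1}. \<forall>x. norm (T t x) \<le> K * norm x" using Tbound[of "t0+1"] by blast
    define K1 where "K1 = max K 1"
    have K1: "K1 > 0" by (simp add: K1_def)
    have K1b: "norm (T t x) \<le> K1 * norm x" if "t \<in> {0..t0+1}" for t x
    proof -
      have "K * norm x \<le> K1 * norm x" by (rule mult_right_mono) (auto simp: K1_def)
      moreover have "norm (T t x) \<le> K * norm x" using K that by blast
      ultimately show ?thesis by linarith
    qed
    define c where "c = T t0 x0"
    define g where "g = (\<lambda>y. f (c + y))"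
    have gb: "\<bar>g y\<bar> \<le> B" for y by (simp add: g_def fb)
    have gl: "L-lipschitz_on UNIV g"
    proof (rule lipschitz_onI)
      fix y z :: 'a assume "y \<in> UNIV" "z \<in> UNIV"
      have "dist (f (c + y)) (f (c + z)) \<le> L * dist (c + y) (c + z)" by (rule lipschitz_onD[OF fl]) auto
      then show "dist (g y) (g z) \<le> L * dist y z" by (simp add: g_def dist_add_cancel)
    qed (rule L0)
    have gc: "continuous_on UNIV g" using gl by (rule lipschitz_on_continuous_on)
    have "\<exists>d>0. \<forall>s\<ge>0. \<bar>s - t0\<bar> < d \<longrightarrow> \<bar>integral\<^sup>L (\<mu> s) g - integral\<^sup>L (\<mu> t0) g\<bar> < e/2"
      by (rule Gcont[OF gb gl t0]) (use e in simp)
    then obtain d1 where d1: "d1 > 0" "\<And>s. 0 \<le> s \<Longrightarrow> \<bar>s - t0\<bar> < d1 \<Longrightarrow> \<bar>integral\<^sup>L (\<mu> s) g - integral\<^sup>L (\<mu> t0) g\<bar> < e/2"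
      by blast
    define e2 where "e2 = e / (4 * (L + 1))"
    have e2: "e2 > 0" using e L0 by (simp add: e2_def)
    have "\<exists>d>0. \<forall>t'\<in>{0..}. dist t' t0 < d \<longrightarrow> dist (T t' x0) (T t0 x0) < e2"
      using Tcont[of x0, unfolded continuous_on_iff] t0' e2 by blast
    then obtain d2 where d2: "d2 > 0" "\<And>t'. t' \<in> {0..} \<Longrightarrow> dist t' t0 < d2 \<Longrightarrow> dist (T t' x0) (T t0 x0) < e2"
      by blast
    define d3 where "d3 = e2 / K1"
    have d3: "d3 > 0" using e2 K1 by (simp add: d3_def)
    define d where "d = min (min d1 d2) (min 1 d3)"
    have d: "d > 0" using d1 d2 d3 by (simp add: d_def)
    show "\<exists>d>0. \<forall>p'\<in>{0..} \<times> UNIV. dist p' p < d \<longrightarrow>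
            dist ((\<lambda>(t, x). transition_op T \<mu> t f x) p') ((\<lambda>(t, x). transition_op T \<mu> t f x) p) < e"
    proof (intro exI[of _ d] conjI ballI impI d)
      fix p' :: "real \<times> 'a" assume p': "p' \<in> {0..} \<times> UNIV" "dist p' p < d"
      obtain t x where tx: "p' = (t, x)" by (cases p')
      have t: "0 \<le> t" using p' tx by auto
      have "dist t t0 \<le> dist p' p" using dist_fst_le[of p' p] tx px by simp
      then have dt: "dist t t0 < d" using p'(2) by linarith
      have "dist x x0 \<le> dist p' p" using dist_snd_le[of p' p] tx px by simp
      then have dx: "dist x x0 < d" using p'(2) by linarith
      have dt1: "\<bar>t - t0\<bar> < d1" using dt by (simp add: d_def dist_real_def)
      have dt2: "dist t t0 < d2" using dt by (simp add: d_def)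
      have dt3: "\<bar>t - t0\<bar> < 1" using dt by (simp add: d_def dist_real_def)
      have nx: "norm (x - x0) < d3" using dx by (simp add: d_def dist_norm)
      have tle: "t \<in> {0..t0+1}" using t dt3 by simp
      have n1: "norm (T t x - c) < 2 * e2"
      proof -
        interpret TL: bounded_linear "T t" by (rule Tbl[OF t])
        have "T t x - c = T t (x - x0) + (T t x0 - T t0 x0)"
          by (simp add: c_def TL.diff)
        then have "norm (T t x - c) \<le> norm (T t (x - x0)) + norm (T t x0 - T t0 x0)"
          using norm_triangle_ineq[of "T t (x - x0)" "T t x0 - T t0 x0"] by simp
        moreover have "norm (T t (x - x0)) \<le> K1 * norm (x - x0)" by (rule K1b[OF tle])
        moreover have "K1 * norm (x - x0) < K1 * d3" using K1 nx by simp
        moreover have "K1 * d3 = e2" using K1 by (simp add: d3_def)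
        moreover have "norm (T t x0 - T t0 x0) < e2" using d2(2)[of t] t dt2 by (simp add: dist_norm)
        ultimately show ?thesis by linarith
      qed
      have gm: "g \<in> borel_measurable (\<mu> t)" by (rule cont_meas[OF sets_mu[OF t] gc])
      have pt: "\<bar>f (T t x + y) - g y\<bar> \<le> L * norm (T t x - c)" for y
      proof -
        have "dist (f (T t x + y)) (f (c + y)) \<le> L * dist (T t x + y) (c + y)"
          by (rule lipschitz_onD[OF fl]) auto
        then show ?thesis by (simp add: g_def dist_real_def dist_norm)
      qed
      have A: "\<bar>transition_op T \<mu> t f x - integral\<^sup>L (\<mu> t) g\<bar> \<le> L * norm (T t x - c)"
        unfolding transition_op_def by (rule diff_integral[OF prob[OF t] Pmeas[OF t fc] gm fb gb pt])
      have Lb: "L * norm (T t x - c) < e/2"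
      proof -
        have "L * norm (T t x - c) \<le> (L + 1) * norm (T t x - c)" by (simp add: algebra_simps)
        also have "(L + 1) * norm (T t x - c) < (L + 1) * (2 * e2)"
          using n1 L0 by (intro mult_strict_left_mono) auto
        also have "(L + 1) * (2 * e2) = e/2" using L0 by (simp add: e2_def field_simps)
        finally show ?thesis .
      qed
      have G: "\<bar>integral\<^sup>L (\<mu> t) g - integral\<^sup>L (\<mu> t0) g\<bar> < e/2" by (rule d1(2)[OF t dt1])
      have P0: "transition_op T \<mu> t0 f x0 = integral\<^sup>L (\<mu> t0) g" by (simp add: transition_op_def g_def c_def)
      have "\<bar>transition_op T \<mu> t f x - transition_op T \<mu> t0 f x0\<bar>
            \<le> \<bar>transition_op T \<mu> t f x - integral\<^sup>L (\<mu> t) g\<bar> + \<bar>integral\<^sup>L (\<mu> t) g - integral\<^sup>L (\<mu> t0) g\<bar>"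
        unfolding P0 using abs_triangle_ineq[of "transition_op T \<mu> t f x - integral\<^sup>L (\<mu> t) g" "integral\<^sup>L (\<mu> t) g - integral\<^sup>L (\<mu> t0) g"] by simp
      then have "\<bar>transition_op T \<mu> t f x - transition_op T \<mu> t0 f x0\<bar> < e" using A Lb G by linarith
      then show "dist ((\<lambda>(t, x). transition_op T \<mu> t f x) p') ((\<lambda>(t, x). transition_op T \<mu> t f x) p) < e"
        by (simp add: tx px dist_real_def)
    qed
  qed
qed


end

theorem proposition4p1:
  fixes T :: "real \<Rightarrow> 'a::{real_inner, complete_space, second_countable_topology} \<Rightarrow> 'a"
    and \<mu> :: "real \<Rightarrow> 'a measure"
  assumes sg: "strongly_continuous_semigroup T"
    and prob: "\<And>t. t \<ge> 0 \<Longrightarrow> prob_space (\<mu> t)"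
    and sets_mu: "\<And>t. t \<ge> 0 \<Longrightarrow> sets (\<mu> t) = sets borel"
    and mu0: "\<mu> 0 = return borel 0"
    and lim0: "weak_conv_at_0 \<mu> (\<mu> 0)"
    and conv: "\<And>s t. s \<ge> 0 \<Longrightarrow> t \<ge> 0 \<Longrightarrow>
                 \<mu> (t + s) = meas_conv (distr (\<mu> t) borel (T s)) (\<mu> s)"
  shows "(\<forall>f\<in>Lip_b. continuous_on ({0..} \<times> UNIV) (\<lambda>(t, x). transition_op T \<mu> t f x))
       \<and> (\<forall>t>0. transition_op T \<mu> t ` Lip_b \<subseteq> Lip_b)
       \<and> (\<forall>t>0. transition_op T \<mu> t ` C_b \<subseteq> C_b)
       \<and> (\<forall>t>0. transition_op T \<mu> t ` C_b_sigma_w \<subseteq> C_b_sigma_w)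
       \<and> (\<forall>t>0. compact_operator (T t) \<longrightarrow> transition_op T \<mu> t ` C_b \<subseteq> C_b_sigma_w)"
proof -
  note H = sg prob sets_mu mu0 lim0 conv
  have 1: "\<forall>f\<in>Lip_b. continuous_on ({0..} \<times> UNIV) (\<lambda>(t, x). transition_op T \<mu> t f x)"
  proof
    fix f :: "'a \<Rightarrow> real" assume f: "f \<in> Lip_b"
    show "continuous_on ({0..} \<times> UNIV) (\<lambda>(t, x). transition_op T \<mu> t f x)"
      by (rule Pcont[where T=T and \<mu>=\<mu>, OF H]) (simp_all add: f)
  qed
  have 2: "\<forall>t>0. transition_op T \<mu> t ` Lip_b \<subseteq> Lip_b"
  proof (intro allI impI image_subsetI)
    fix t :: real and f :: "'a \<Rightarrow> real" assume tf: "t > 0" "f \<in> Lip_b"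
    show "transition_op T \<mu> t f \<in> Lip_b" by (rule Plip[where T=T and \<mu>=\<mu>, OF H]) (simp_all add: tf)
  qed
  have 3: "\<forall>t>0. transition_op T \<mu> t ` C_b \<subseteq> C_b"
  proof (intro allI impI image_subsetI)
    fix t :: real and f :: "'a \<Rightarrow> real" assume tf: "t > 0" "f \<in> C_b"
    show "transition_op T \<mu> t f \<in> C_b" by (rule PCb[where T=T and \<mu>=\<mu>, OF H]) (simp_all add: tf)
  qed
  have 4: "\<forall>t>0. transition_op T \<mu> t ` C_b_sigma_w \<subseteq> C_b_sigma_w"
  proof (intro allI impI image_subsetI)
    fix t :: real and f :: "'a \<Rightarrow> real" assume tf: "t > 0" "f \<in> C_b_sigma_w"
    show "transition_op T \<mu> t f \<in> C_b_sigma_w" by (rule Psw[where T=T and \<mu>=\<mu>, OF H]) (simp_all add: tf)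
  qed
  have 5: "\<forall>t>0. compact_operator (T t) \<longrightarrow> transition_op T \<mu> t ` C_b \<subseteq> C_b_sigma_w"
  proof (intro allI impI image_subsetI)
    fix t :: real and f :: "'a \<Rightarrow> real" assume tf: "t > 0" "compact_operator (T t)" "f \<in> C_b"
    show "transition_op T \<mu> t f \<in> C_b_sigma_w" by (rule Pcomp[where T=T and \<mu>=\<mu>, OF H]) (simp_all add: tf)
  qed
  show ?thesis using 1 2 3 4 5 by blast
qed

end
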